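(* Let $m\in\mathbb N$, let $X$ be a normed space, and let $z_j\in X$ and $f_j,f_{j,k}\in X^*$ ($1\le j\le m$, $k\in\mathbb N$) be such that $f_j(z_r)=f_{j,k}(z_r)=\delta_{j,r}$ for $1\le j,r\le m$, $k\in\mathbb N$, and $\lim_{k\to\infty}\|f_{j,k}-f_j\|=0$ for $1\le j\le m$. Let $Y=\bigcap_{j=1}^m\ker f_j$ and $Y_k=\bigcap_{j=1}^m\ker f_{j,k}$ for $k\in\mathbb N$. Then $\|x+Y_k\|_{X/Y_k}\to\|x+Y\|_{X/Y}$ as $k\to\infty$ for each $x\in X$.
   Context: $\delta_{j,r}$ is the Kronecker delta; quotient norms are the usual ones. *)

theory Defs
  imports "HOL-Analysis.Analysis"
begin

definition quot_norm :: "'a::real_normed_vector \<Rightarrow> 'a set \<Rightarrow> real" where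
  "quot_norm x Y = (INF y\<in>Y. norm (x - y))"

definition common_kernel :: "nat \<Rightarrow> (nat \<Rightarrow> ('a::real_normed_vector \<Rightarrow>\<^sub>L real)) \<Rightarrow> 'a set" where
  "common_kernel m g = {x. \<forall>j\<in>{1..m}. blinfun_apply (g j) x = 0}"

end

theory Submission
  imports Defs
begin

lemma quot_le_norm:
  assumes "(0::'a::real_normed_vector) \<in> Y"
  shows "quot_norm x Y \<le> norm x"
proof -
  have "quot_norm x Y \<le> norm (x - 0)"
    unfolding quot_norm_def
    by (rule cINF_lower[OF _ assms]) (auto intro: bdd_belowI[where m=0])
  then show ?thesis by simp
qed

lemma quot_compare:
  fixes Y Y' :: "'a::real_normed_vector set"
  assumes "0 \<in> Y" "c \<ge> 0" "\<And>y. y \<in> Y \<Longrightarrow> \<exists>y'\<in>Y'. norm (y - y') \<le> c * norm y"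
  shows "quot_norm x Y' \<le> (1 + c) * quot_norm x Y + c * norm x"
proof -
  have bd: "bdd_below ((\<lambda>y. norm (x - y)) ` Y')" by (auto intro: bdd_belowI[where m=0])
  have key: "(quot_norm x Y' - c * norm x) / (1 + c) \<le> norm (x - y)" if yY: "y \<in> Y" for y
  proof -
    obtain y' where y': "y' \<in> Y'" "norm (y - y') \<le> c * norm y" using assms(3)[OF yY] by blast
    have "quot_norm x Y' \<le> norm (x - y')"
      unfolding quot_norm_def by (rule cINF_lower[OF bd y'(1)])
    also have "\<dots> \<le> norm (x - y) + norm (y - y')"
      using norm_triangle_ineq[of "x - y" "y - y'"] by simp
    finally have q1: "quot_norm x Y' \<le> norm (x - y) + norm (y - y')" .
    have "norm y \<le> norm x + norm (x - y)"
      using norm_triangle_ineq4[of x "x - y"] by simp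
    hence "c * norm y \<le> c * (norm x + norm (x - y))" using assms(2) by (simp add: mult_left_mono)
    with q1 have "quot_norm x Y' \<le> (1 + c) * norm (x - y) + c * norm x"
      using y'(2) by (simp add: algebra_simps)
    then show ?thesis using assms(2) by (simp add: divide_simps algebra_simps)
  qed
  have "(quot_norm x Y' - c * norm x) / (1 + c) \<le> quot_norm x Y"
    unfolding quot_norm_def[of x Y] using assms(1) by (intro cINF_greatest) (auto intro: key)
  then show ?thesis using assms(2) by (simp add: divide_simps algebra_simps)
qed

lemma proj_exists:
  fixes g h :: "nat \<Rightarrow> ('a::real_normed_vector \<Rightarrow>\<^sub>L real)" and z :: "nat \<Rightarrow> 'a"
  assumes hz: "\<And>j r. j \<in> {1..m} \<Longrightarrow> r \<in> {1..m} \<Longrightarrow>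
             blinfun_apply (h j) (z r) = (if j = r then 1 else 0)"
    and y: "y \<in> common_kernel m g"
  shows "\<exists>y'\<in>common_kernel m h. norm (y - y') \<le> (\<Sum>j\<in>{1..m}. norm (h j - g j) * norm (z j)) * norm y"
proof
  define y' where "y' = y - (\<Sum>j\<in>{1..m}. blinfun_apply (h j) y *\<^sub>R z j)"
  show "y' \<in> common_kernel m h"
    unfolding common_kernel_def
  proof (safe)
    fix i assume i: "i \<in> {1..m}"
    have "blinfun_apply (h i) y' = blinfun_apply (h i) y - (\<Sum>j\<in>{1..m}. blinfun_apply (h j) y * blinfun_apply (h i) (z j))"
      unfolding y'_def by (simp add: blinfun.diff_right blinfun.sum_right blinfun.scaleR_right)
    also have "(\<Sum>j\<in>{1..m}. blinfun_apply (h j) y * blinfun_apply (h i) (z j))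
        = (\<Sum>j\<in>{1..m}. if j = i then blinfun_apply (h j) y else 0)"
      by (rule sum.cong) (use i hz in auto)
    also have "\<dots> = blinfun_apply (h i) y" using i by simp
    finally show "blinfun_apply (h i) y' = 0" by simp
  qed
  have "norm (y - y') = norm (\<Sum>j\<in>{1..m}. blinfun_apply (h j - g j) y *\<^sub>R z j)"
  proof -
    have "(\<Sum>j\<in>{1..m}. blinfun_apply (h j) y *\<^sub>R z j) = (\<Sum>j\<in>{1..m}. blinfun_apply (h j - g j) y *\<^sub>R z j)"
      by (rule sum.cong) (use y in \<open>auto simp: common_kernel_def blinfun.diff_left\<close>)
    then show ?thesis unfolding y'_def by simp
  qed
  also have "\<dots> \<le> (\<Sum>j\<in>{1..m}. norm (blinfun_apply (h j - g j) y *\<^sub>R z j))"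
    by (rule norm_sum)
  also have "\<dots> \<le> (\<Sum>j\<in>{1..m}. norm (h j - g j) * norm (z j) * norm y)"
  proof (rule sum_mono)
    fix j
    have nb: "norm (blinfun_apply (h j - g j) y) \<le> norm (h j - g j) * norm y" by (rule norm_blinfun)
    then show "norm (blinfun_apply (h j - g j) y *\<^sub>R z j) \<le> norm (h j - g j) * norm (z j) * norm y"
      using mult_left_mono[OF nb norm_ge_zero[of "z j"]] by (simp add: algebra_simps)
  qed
  also have "\<dots> = (\<Sum>j\<in>{1..m}. norm (h j - g j) * norm (z j)) * norm y"
    by (simp add: sum_distrib_right)
  finally show "norm (y - y') \<le> (\<Sum>j\<in>{1..m}. norm (h j - g j) * norm (z j)) * norm y" .
qed

lemma proj_exists2:
  fixes f :: "nat \<Rightarrow> ('a::real_normed_vector \<Rightarrow>\<^sub>L real)" and fk :: "nat \<Rightarrow> nat \<Rightarrow> ('a \<Rightarrow>\<^sub>L real)"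
  assumes "\<And>j r. j \<in> {1..m} \<Longrightarrow> r \<in> {1..m} \<Longrightarrow>
             blinfun_apply (f j) (z r) = (if j = r then 1 else 0)"
  and "y \<in> common_kernel m (fk k)"
  shows "\<exists>y'\<in>common_kernel m f. norm (y - y') \<le> (\<Sum>j\<in>{1..m}. norm (f j - fk k j) * norm (z j)) * norm y"
  by (rule proj_exists[where h=f and g="fk k"]) (fact assms)+

theorem lemma4p2:
  fixes m :: nat
    and z :: "nat \<Rightarrow> 'a::real_normed_vector"
    and f :: "nat \<Rightarrow> ('a \<Rightarrow>\<^sub>L real)"
    and fk :: "nat \<Rightarrow> nat \<Rightarrow> ('a \<Rightarrow>\<^sub>L real)"
  assumes "\<And>j r. j \<in> {1..m} \<Longrightarrow> r \<in> {1..m} \<Longrightarrow>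
             blinfun_apply (f j) (z r) = (if j = r then 1 else 0)"
    and "\<And>j r k. j \<in> {1..m} \<Longrightarrow> r \<in> {1..m} \<Longrightarrow>
             blinfun_apply (fk k j) (z r) = (if j = r then 1 else 0)"
    and "\<And>j. j \<in> {1..m} \<Longrightarrow> (\<lambda>k. norm (fk k j - f j)) \<longlonglongrightarrow> 0"
  shows "\<forall>x. (\<lambda>k. quot_norm x (common_kernel m (fk k)))
              \<longlonglongrightarrow> quot_norm x (common_kernel m f)"
proof
  fix x :: 'a
  define c where "c k = (\<Sum>j\<in>{1..m}. norm (fk k j - f j) * norm (z j))" for k
  define d where "d = quot_norm x (common_kernel m f)"
  define dk where "dk k = quot_norm x (common_kernel m (fk k))" for k
  have c0: "c k \<ge> 0" for k unfolding c_def by (intro sum_nonneg) auto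
  have ct: "c \<longlonglongrightarrow> 0"
  proof -
    have "(\<lambda>k. \<Sum>j\<in>{1..m}. norm (fk k j - f j) * norm (z j)) \<longlonglongrightarrow> (\<Sum>j\<in>{1..m}. 0 * norm (z j))"
      by (intro tendsto_sum tendsto_mult tendsto_const) (use assms(3) in auto)
    then show ?thesis unfolding c_def by simp
  qed
  have z1: "0 \<in> common_kernel m f" "\<And>k. 0 \<in> common_kernel m (fk k)"
    by (auto simp: common_kernel_def)
  have dle: "d \<le> norm x" unfolding d_def by (rule quot_le_norm[OF z1(1)])
  have dkle: "dk k \<le> norm x" for k unfolding dk_def by (rule quot_le_norm[OF z1(2)])
  have up: "dk k \<le> (1 + c k) * d + c k * norm x" for k
    unfolding dk_def d_def c_def
    by (rule quot_compare[OF z1(1)]) (use c0[unfolded c_def] proj_exists[OF assms(2)] in auto)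
  have lo: "d \<le> (1 + c k) * dk k + c k * norm x" for k
  proof -
    have "d \<le> (1 + (\<Sum>j\<in>{1..m}. norm (f j - fk k j) * norm (z j))) * dk k
       + (\<Sum>j\<in>{1..m}. norm (f j - fk k j) * norm (z j)) * norm x"
      unfolding dk_def d_def
    proof (rule quot_compare[OF z1(2)])
      show "0 \<le> (\<Sum>j\<in>{1..m}. norm (f j - fk k j) * norm (z j))" by (intro sum_nonneg) auto
    next
      fix y assume yk: "y \<in> common_kernel m (fk k)"
      show "\<exists>y'\<in>common_kernel m f. norm (y - y') \<le> (\<Sum>j\<in>{1..m}. norm (f j - fk k j) * norm (z j)) * norm y"
        by (rule proj_exists2[of m f z y fk k, OF assms(1) yk])
    qed
    moreover have "(\<Sum>j\<in>{1..m}. norm (f j - fk k j) * norm (z j)) = c k"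
      unfolding c_def by (simp add: norm_minus_commute)
    ultimately show ?thesis by simp
  qed
  have bnd: "norm (dk k - d) \<le> 2 * norm x * c k" for k
  proof -
    have "c k * d \<le> c k * norm x" "c k * dk k \<le> c k * norm x"
      using c0[of k] dle dkle[of k] by (auto intro: mult_left_mono)
    then show ?thesis using up[of k] lo[of k] by (simp add: algebra_simps abs_le_iff)
  qed
  have "(\<lambda>k. 2 * norm x * c k) \<longlonglongrightarrow> 2 * norm x * 0"
    by (rule tendsto_mult[OF tendsto_const ct])
  then have ct2: "(\<lambda>k. 2 * norm x * c k) \<longlonglongrightarrow> 0" by simp
  have ev: "\<forall>k. norm (dk k - d) \<le> 2 * norm x * c k" using bnd by blast
  have "(\<lambda>k. dk k - d) \<longlonglongrightarrow> 0"
    by (rule Lim_null_comparison[OF always_eventually[OF ev] ct2])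
  then show "(\<lambda>k. quot_norm x (common_kernel m (fk k))) \<longlonglongrightarrow> quot_norm x (common_kernel m f)"
    unfolding dk_def d_def by (simp add: LIM_zero_iff)
qed

end
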